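(* For $D\to\infty$, and any distinct primes $p,q$, $$S_1(D)=\frac{\pi^4D^4}{2^3\cdot3^2\cdot5}+O(D^3),\quad S_p(D)=\frac{\pi^4D^4}{2^3\cdot3^2\cdot5}\cdot\frac{p+1}{p^2+p+1}+O(D^3),$$ $$S_{pq}(D)=\frac{\pi^4D^4}{2^3\cdot3^2\cdot5}\cdot\frac{p+1}{p^2+p+1}\cdot\frac{q+1}{q^2+q+1}+O(D^3).$$
   Context: For a positive integer $k$, $S_k(D)=\sum_{d=1}^D\sum_{m\mid d,\ k\mid m}\sigma(d/m)\,\mathbf a(m)$, where $\sigma(n)$ is the sum of positive divisors of $n$ and $\mathbf a(m)=|\mathrm{SL}_2(\mathbb Z/m\mathbb Z)|=m\sum_{t\mid m}\mu(m/t)t^2$ ($\mu$ the Möbius function). *)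

theory Defs
  imports "HOL-Analysis.Analysis" "HOL-Library.Landau_Symbols"
begin

definition moebius_mu :: "nat \<Rightarrow> int" where
  "moebius_mu n = (if n = 0 then 0
     else if (\<forall>p. prime p \<longrightarrow> \<not> p^2 dvd n) then (-1) ^ card (prime_factors n) else 0)"

definition sigma1 :: "nat \<Rightarrow> nat" where
  "sigma1 n = (\<Sum>d | d dvd n. d)"

text \<open>a(m) = |SL_2(Z/mZ)| = m * sum_{t | m} mu(m/t) t^2\<close>
definition aSL2 :: "nat \<Rightarrow> int" where
  "aSL2 m = int m * (\<Sum>t | t dvd m. moebius_mu (m div t) * int t ^ 2)"

definition S :: "nat \<Rightarrow> nat \<Rightarrow> int" where
  "S k D = (\<Sum>d\<in>{1..D}. \<Sum>m | m dvd d \<and> k dvd m. int (sigma1 (d div m)) * aSL2 m)"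

end

theory Submission
  imports Defs "HOL-Analysis.Analysis"
begin




lemma mu_sq: assumes "prime p" "p^2 dvd d" shows "moebius_mu d = 0"
  using assms unfolding moebius_mu_def by auto

lemma mu_mult_prime:
  fixes p s :: nat
  assumes p: "prime p" and s: "s > 0" and nd: "\<not> p dvd s"
  shows "moebius_mu (p * s) = - moebius_mu s"
proof -
  have sqf: "(\<forall>r. prime r \<longrightarrow> \<not> r^2 dvd p * s) = (\<forall>r. prime r \<longrightarrow> \<not> r^2 dvd s)"
  proof
    assume H: "\<forall>r. prime r \<longrightarrow> \<not> r^2 dvd p * s"
    show "\<forall>r. prime r \<longrightarrow> \<not> r^2 dvd s"
      using H dvd_mult by blast
  next
    assume H: "\<forall>r. prime r \<longrightarrow> \<not> r^2 dvd s"
    show "\<forall>r. prime r \<longrightarrow> \<not> r^2 dvd p * s"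
    proof (intro allI impI)
      fix r :: nat assume r: "prime r"
      show "\<not> r^2 dvd p * s"
      proof (cases "r = p")
        case True
        show ?thesis
        proof
          assume "r^2 dvd p * s"
          hence "p*p dvd p * s" using True by (simp add: power2_eq_square)
          hence "p dvd s" using p by (simp add: prime_gt_0_nat)
          thus False using nd by simp
        qed
      next
        case False
        have "coprime (r^2) p" using r p False
          by (simp add: primes_coprime)
        thus ?thesis using H r
          by (metis coprime_dvd_mult_right_iff)
      qed
    qed
  qed
  have pf: "prime_factors (p * s) = insert p (prime_factors s)"
    using prime_factors_product[of p s] p s by (auto simp: prime_prime_factors)
  have pn: "p \<notin> prime_factors s" using nd by auto
  have card: "card (prime_factors (p * s)) = Suc (card (prime_factors s))"
    using pf pn by simp
  show ?thesis using p s sqf card unfolding moebius_mu_def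
    by (auto simp: prime_gt_0_nat)
qed



lemma mu_1[simp]: "moebius_mu 1 = 1" "moebius_mu (Suc 0) = 1" unfolding moebius_mu_def by auto

lemma moebius_sum:
  fixes n :: nat assumes n: "n > 0"
  shows "(\<Sum>d | d dvd n. moebius_mu d) = (if n = 1 then 1 else 0)"
proof (cases "n = 1")
  case True thus ?thesis by simp
next
  case False
  then obtain p where p: "prime p" "p dvd n" using prime_factor_nat by blast
  define A where "A = {d. d dvd n}"
  define A0 where "A0 = {d\<in>A. \<not> p dvd d}"
  define A1 where "A1 = {d\<in>A. p dvd d \<and> \<not> p^2 dvd d}"
  define A2 where "A2 = {d\<in>A. p^2 dvd d}"
  have finA: "finite A" unfolding A_def using n by simp
  have split: "A = A0 \<union> (A1 \<union> A2)" unfolding A0_def A1_def A2_def by auto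
  have d1: "A0 \<inter> (A1 \<union> A2) = {}" unfolding A0_def A1_def A2_def
    by (auto simp: power2_eq_square dest: dvd_mult_left)
  have d2: "A1 \<inter> A2 = {}" unfolding A1_def A2_def by auto
  have fin0: "finite A0" "finite A1" "finite A2" using finA unfolding A0_def A1_def A2_def by auto
  have s2: "(\<Sum>d\<in>A2. moebius_mu d) = 0"
    using mu_sq[OF p(1)] unfolding A2_def by simp
  have img: "A1 = (\<lambda>s. p * s) ` A0"
  proof
    show "A1 \<subseteq> (\<lambda>s. p * s) ` A0"
    proof
      fix d assume d: "d \<in> A1"
      then obtain s where s: "d = p * s" unfolding A1_def by (auto elim: dvdE)
      have "s dvd n" using d s unfolding A1_def A_def by (auto intro: dvd_mult_right)
      moreover have "\<not> p dvd s" using d s unfolding A1_def by (auto simp: power2_eq_square)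
      ultimately show "d \<in> (\<lambda>s. p * s) ` A0" using s unfolding A0_def A_def by auto
    qed
  next
    show "(\<lambda>s. p * s) ` A0 \<subseteq> A1"
    proof
      fix d assume "d \<in> (\<lambda>s. p * s) ` A0"
      then obtain s where s: "d = p * s" "s dvd n" "\<not> p dvd s" unfolding A0_def A_def by auto
      have "coprime p s" using p(1) s(3) by (simp add: prime_imp_coprime)
      hence "p * s dvd n" using p(2) s(2) by (simp add: divides_mult)
      moreover have "\<not> p^2 dvd p * s" using s(3) p(1) by (simp add: power2_eq_square prime_gt_0_nat)
      ultimately show "d \<in> A1" using s unfolding A1_def A_def by auto
    qed
  qed
  have inj: "inj_on (\<lambda>s. p * s) A0" using p(1) by (auto simp: inj_on_def prime_gt_0_nat)
  have s1: "(\<Sum>d\<in>A1. moebius_mu d) = - (\<Sum>d\<in>A0. moebius_mu d)"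
  proof -
    have "(\<Sum>d\<in>A1. moebius_mu d) = (\<Sum>s\<in>A0. moebius_mu (p * s))"
      unfolding img by (rule sum.reindex[OF inj, unfolded comp_def])
    also have "\<dots> = (\<Sum>s\<in>A0. - moebius_mu s)"
    proof (rule sum.cong[OF refl])
      fix s assume "s \<in> A0"
      hence "s > 0" "\<not> p dvd s" unfolding A0_def A_def using n by (auto intro: Nat.gr0I)
      thus "moebius_mu (p * s) = - moebius_mu s" using mu_mult_prime p(1) by blast
    qed
    finally show ?thesis by (simp add: sum_negf)
  qed
  have "(\<Sum>d | d dvd n. moebius_mu d) = (\<Sum>d\<in>A. moebius_mu d)" unfolding A_def ..
  also have "\<dots> = (\<Sum>d\<in>A0. moebius_mu d) + ((\<Sum>d\<in>A1. moebius_mu d) + (\<Sum>d\<in>A2. moebius_mu d))"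
    by (subst split, subst sum.union_disjoint, use fin0 d1 in auto, subst sum.union_disjoint, use fin0 d2 in auto)
  also have "\<dots> = 0" using s1 s2 by simp
  finally show ?thesis using False by simp
qed



lemma divisor_pairs_reindex:
  fixes n :: nat and H :: "nat \<Rightarrow> nat \<Rightarrow> 'a::comm_monoid_add"
  assumes n: "n > 0"
  shows "(\<Sum>m | m dvd n. \<Sum>v | v dvd (n div m). H m v) = (\<Sum>e | e dvd n. \<Sum>m | m dvd e. H m (e div m))"
proof -
  have f1: "finite {m. m dvd n}" using n by simp
  have f2: "\<forall>m\<in>{m. m dvd n}. finite {v. v dvd (n div m)}"
    using n by (auto intro!: finite_divisors_nat simp: dvd_div_eq_0_iff)
  have f3: "\<forall>e\<in>{e. e dvd n}. finite {m. m dvd e}"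
    using n by (auto intro!: finite_divisors_nat dest: dvd_pos_nat)
  have L: "(\<Sum>m | m dvd n. \<Sum>v | v dvd (n div m). H m v) = (\<Sum>x\<in>Sigma {m. m dvd n} (\<lambda>m. {v. v dvd n div m}). H (fst x) (snd x))"
    by (subst sum.Sigma[OF f1 f2]) (auto simp: case_prod_unfold)
  have R: "(\<Sum>e | e dvd n. \<Sum>m | m dvd e. H m (e div m)) = (\<Sum>x\<in>Sigma {e. e dvd n} (\<lambda>e. {m. m dvd e}). H (snd x) (fst x div snd x))"
    by (subst sum.Sigma[OF f1 f3]) (auto simp: case_prod_unfold)
  have "(\<Sum>x\<in>Sigma {m. m dvd n} (\<lambda>m. {v. v dvd n div m}). H (fst x) (snd x))
      = (\<Sum>x\<in>Sigma {e. e dvd n} (\<lambda>e. {m. m dvd e}). H (snd x) (fst x div snd x))"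
  proof (rule sum.reindex_bij_witness[where i = "\<lambda>(e,m). (m, e div m)" and j = "\<lambda>(m,v). (m * v, m)"])
    fix a assume a: "a \<in> Sigma {e. e dvd n} (\<lambda>e. {m. m dvd e})"
    then obtain e m where em: "a = (e,m)" "e dvd n" "m dvd e" by auto
    show "(case (case a of (e, m) \<Rightarrow> (m, e div m)) of (m, v) \<Rightarrow> (m * v, m)) = a"
      using em by auto
    show "(case a of (e, m) \<Rightarrow> (m, e div m)) \<in> Sigma {m. m dvd n} (\<lambda>m. {v. v dvd n div m})"
      using em n by (auto elim!: dvdE simp: dvd_pos_nat intro: dvd_trans)
  next
    fix b assume b: "b \<in> Sigma {m. m dvd n} (\<lambda>m. {v. v dvd n div m})"
    then obtain m v where mv: "b = (m,v)" "m dvd n" "v dvd n div m" by auto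
    have m0: "m > 0" using mv n dvd_pos_nat by blast
    show "(case (case b of (m, v) \<Rightarrow> (m * v, m)) of (e, m) \<Rightarrow> (m, e div m)) = b"
      using mv m0 by auto
    have "m * v dvd n" using mv mult_dvd_mono[OF dvd_refl[of m] mv(3)] dvd_mult_div_cancel[OF mv(2)] by simp
    thus "(case b of (m, v) \<Rightarrow> (m * v, m)) \<in> Sigma {e. e dvd n} (\<lambda>e. {m. m dvd e})"
      using mv by auto
    show "(case (case b of (m, v) \<Rightarrow> (m * v, m)) of x \<Rightarrow> H (snd x) (fst x div snd x)) = H (fst b) (snd b)"
      using mv m0 by auto
  qed
  thus ?thesis using L R by simp
qed

definition Jt :: "nat \<Rightarrow> int" where
  "Jt m = (\<Sum>t | t dvd m. moebius_mu (m div t) * int t ^ 2)"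

lemma aSL2_Jt: "aSL2 m = int m * Jt m"
  unfolding aSL2_def Jt_def ..

lemma Jt_sum:
  fixes n :: nat assumes n: "n > 0"
  shows "(\<Sum>m | m dvd n. Jt m) = int n ^ 2"
proof -
  have "(\<Sum>m | m dvd n. Jt m) = (\<Sum>m | m dvd n. \<Sum>t | t dvd m. moebius_mu (m div t) * int t ^ 2)"
    unfolding Jt_def ..
  also have "\<dots> = (\<Sum>t | t dvd n. \<Sum>s | s dvd (n div t). moebius_mu s * int t ^ 2)"
    using divisor_pairs_reindex[OF n, of "\<lambda>t s. moebius_mu s * int t ^ 2"] by simp
  also have "\<dots> = (\<Sum>t | t dvd n. if t = n then int n ^ 2 else 0)"
  proof (rule sum.cong[OF refl])
    fix t assume t: "t \<in> {t. t dvd n}"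
    have nt: "n div t > 0" using t n by (auto simp: dvd_div_eq_0_iff intro: Nat.gr0I)
    have "(\<Sum>s | s dvd (n div t). moebius_mu s * int t ^ 2) = (\<Sum>s | s dvd (n div t). moebius_mu s) * int t ^ 2"
      by (simp add: sum_distrib_right)
    also have "\<dots> = (if n div t = 1 then 1 else 0) * int t ^ 2" using moebius_sum[OF nt] by simp
    also have "\<dots> = (if t = n then int n ^ 2 else 0)"
      using t n by (auto elim!: dvdE)
    finally show "(\<Sum>s | s dvd (n div t). moebius_mu s * int t ^ 2) = (if t = n then int n ^ 2 else 0)" .
  qed
  also have "\<dots> = int n ^ 2" using n by (simp add: sum.delta)
  finally show ?thesis .
qed



lemma Suc_div_split: "e > 0 \<Longrightarrow> Suc D div e = D div e + (if e dvd Suc D then 1 else 0)"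
  by (auto simp: div_Suc dvd_eq_mod_eq_0)

lemma sum_divisors_swap:
  fixes F :: "nat \<Rightarrow> int"
  shows "(\<Sum>d\<in>{1..D}. \<Sum>e | e dvd d. F e) = (\<Sum>e\<in>{1..D}. F e * int (D div e))"
proof (induction D)
  case 0 thus ?case by simp
next
  case (Suc D)
  have "(\<Sum>e\<in>{1..Suc D}. F e * int (Suc D div e))
      = (\<Sum>e\<in>{1..Suc D}. F e * int (D div e)) + (\<Sum>e\<in>{1..Suc D}. if e dvd Suc D then F e else 0)"
    by (subst sum.distrib[symmetric], rule sum.cong, auto simp: Suc_div_split algebra_simps)
  also have "(\<Sum>e\<in>{1..Suc D}. F e * int (D div e)) = (\<Sum>e\<in>{1..D}. F e * int (D div e))"
    by (simp add: sum.cl_ivl_Suc)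
  also have "(\<Sum>e\<in>{1..Suc D}. if e dvd Suc D then F e else 0) = (\<Sum>e | e dvd Suc D. F e)"
  proof -
    have eq: "{e\<in>{1..Suc D}. e dvd Suc D} = {e. e dvd Suc D}"
      by (auto intro: dvd_imp_le dest: dvd_pos_nat[OF zero_less_Suc] Nat.gr0I)
    have fin: "finite {1..Suc D}" by simp
    show ?thesis by (subst sum.inter_filter[OF fin, symmetric]) (simp only: eq)
  qed
  finally show ?case using Suc by simp
qed


definition Bk :: "nat \<Rightarrow> nat \<Rightarrow> int" where
  "Bk k e = (\<Sum>m | m dvd e \<and> k dvd m. Jt m)"

lemma st1:
  fixes d k :: nat assumes d: "d > 0"
  shows "(\<Sum>m | m dvd d \<and> k dvd m. int (sigma1 (d div m)) * aSL2 m)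
       = (\<Sum>m | m dvd d. if k dvd m then int (sigma1 (d div m)) * aSL2 m else 0)"
proof -
  have fin: "finite {m. m dvd d}" using d by simp
  have eq: "{m. m dvd d \<and> k dvd m} = {m \<in> {m. m dvd d}. k dvd m}" by auto
  show ?thesis unfolding eq by (rule sum.inter_filter[OF fin])
qed

lemma st2: "(if k dvd m then int (sigma1 (d div m)) * aSL2 m else 0)
        = (\<Sum>v | v dvd (d div m). if k dvd m then int v * int m * Jt m else 0)"
proof (cases "k dvd m")
  case True
  have "int (sigma1 (d div m)) * aSL2 m = (\<Sum>v | v dvd (d div m). int v) * (int m * Jt m)"
    unfolding sigma1_def aSL2_Jt by (simp only: of_nat_sum)
  also have "\<dots> = (\<Sum>v | v dvd (d div m). int v * int m * Jt m)"
    by (simp only: sum_distrib_right mult.assoc)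
  finally show ?thesis using True by simp
qed simp


lemma st3: assumes e0: "e > (0::nat)"
  shows "(\<Sum>m | m dvd e. if k dvd m then int (e div m) * int m * Jt m else 0) = int e * Bk k e"
proof -
  have fe: "finite {m. m dvd e}" using e0 by simp
  have "(\<Sum>m | m dvd e. if k dvd m then int (e div m) * int m * Jt m else 0)
        = (\<Sum>m | m dvd e. if k dvd m then int e * Jt m else 0)"
  proof (rule sum.cong[OF refl])
    fix m assume "m \<in> {m. m dvd e}"
    hence "e div m * m = e" by simp
    hence "int (e div m) * int m = int e" by (simp only: of_nat_mult[symmetric])
    thus "(if k dvd m then int (e div m) * int m * Jt m else 0) = (if k dvd m then int e * Jt m else 0)"
      by simp
  qed
  also have "\<dots> = (\<Sum>m | m dvd e. int e * (if k dvd m then Jt m else 0))"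
    by (rule sum.cong[OF refl]) simp
  also have "\<dots> = int e * (\<Sum>m | m dvd e. (if k dvd m then Jt m else 0))"
    by (simp only: sum_distrib_left)
  also have "(\<Sum>m | m dvd e. (if k dvd m then Jt m else 0)) = Bk k e"
  proof -
    have eq: "{m. m dvd e \<and> k dvd m} = {m \<in> {m. m dvd e}. k dvd m}" by auto
    show ?thesis unfolding Bk_def eq by (rule sum.inter_filter[OF fe, symmetric])
  qed
  finally show ?thesis .
qed

lemma inner_identity:
  fixes d k :: nat assumes d: "d > 0"
  shows "(\<Sum>m | m dvd d \<and> k dvd m. int (sigma1 (d div m)) * aSL2 m) = (\<Sum>e | e dvd d. int e * Bk k e)"
proof -
  have "(\<Sum>m | m dvd d \<and> k dvd m. int (sigma1 (d div m)) * aSL2 m)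
       = (\<Sum>m | m dvd d. if k dvd m then int (sigma1 (d div m)) * aSL2 m else 0)"
    by (rule st1[OF d])
  also have "\<dots> = (\<Sum>m | m dvd d. \<Sum>v | v dvd (d div m). if k dvd m then int v * int m * Jt m else 0)"
    by (rule sum.cong[OF refl], rule st2)
  also have "\<dots> = (\<Sum>e | e dvd d. \<Sum>m | m dvd e. if k dvd m then int (e div m) * int m * Jt m else 0)"
    by (rule divisor_pairs_reindex[OF d])
  also have "\<dots> = (\<Sum>e | e dvd d. int e * Bk k e)"
    by (rule sum.cong[OF refl], rule st3) (use d in \<open>auto dest: dvd_pos_nat\<close>)
  finally show ?thesis .
qed

lemma S_reform: "S k D = (\<Sum>e\<in>{1..D}. int e * Bk k e * int (D div e))"
proof -
  have "S k D = (\<Sum>d\<in>{1..D}. \<Sum>e | e dvd d. int e * Bk k e)"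
    unfolding S_def by (rule sum.cong[OF refl], rule inner_identity, simp)
  also have "\<dots> = (\<Sum>e\<in>{1..D}. int e * Bk k e * int (D div e))"
    by (rule sum_divisors_swap)
  finally show ?thesis .
qed


definition W :: "(nat \<Rightarrow> real) \<Rightarrow> nat \<Rightarrow> real" where
  "W f D = (\<Sum>e\<in>{1..D}. f e * real (D div e))"

lemma coprime_part_sum:
  fixes p :: nat and g :: "nat \<Rightarrow> real"
  assumes p: "prime p" and g: "\<And>s. s > 0 \<Longrightarrow> g (p * s) = real p ^ 3 * g s"
  shows "(\<Sum>t\<in>{t\<in>{1..y}. \<not> p dvd t}. g t * real (y div t)) = W g y - real p ^ 3 * W g (y div p)"
proof -
  have p0: "p > 0" using p prime_gt_0_nat by blast
  have fin: "finite {1..y}" by simp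
  have split: "W g y = (\<Sum>t\<in>{t\<in>{1..y}. \<not> p dvd t}. g t * real (y div t)) + (\<Sum>t\<in>{t\<in>{1..y}. p dvd t}. g t * real (y div t))"
  proof -
    have "W g y = (\<Sum>t\<in>{1..y}. (if \<not> p dvd t then g t * real (y div t) else 0) + (if p dvd t then g t * real (y div t) else 0))"
      unfolding W_def by (rule sum.cong[OF refl]) simp
    also have "\<dots> = (\<Sum>t\<in>{1..y}. if \<not> p dvd t then g t * real (y div t) else 0) + (\<Sum>t\<in>{1..y}. if p dvd t then g t * real (y div t) else 0)"
      by (rule sum.distrib)
    finally show ?thesis by (simp only: sum.inter_filter[OF fin])
  qed
  have img: "{t\<in>{1..y}. p dvd t} = (\<lambda>s. p * s) ` {1..y div p}"
  proof
    show "{t \<in> {1..y}. p dvd t} \<subseteq> (*) p ` {1..y div p}"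
    proof
      fix t assume t: "t \<in> {t \<in> {1..y}. p dvd t}"
      then obtain s where s: "t = p * s" by (auto elim: dvdE)
      have "s \<ge> 1" using t s by (auto intro: Nat.gr0I)
      moreover have "s \<le> y div p" using t s p0 by (simp add: less_eq_div_iff_mult_less_eq mult.commute)
      ultimately show "t \<in> (*) p ` {1..y div p}" using s by auto
    qed
  next
    show "(*) p ` {1..y div p} \<subseteq> {t \<in> {1..y}. p dvd t}"
    proof
      fix t assume "t \<in> (*) p ` {1..y div p}"
      then obtain s where s0: "t = p * s" "s \<in> {1..y div p}" by (rule imageE)
      hence s: "t = p * s" "1 \<le> s" "s \<le> y div p" by auto
      have "p * s \<le> y" using s p0 by (simp add: less_eq_div_iff_mult_less_eq mult.commute)
      moreover have "p * s \<ge> 1" using s p0 by simp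
      ultimately show "t \<in> {t \<in> {1..y}. p dvd t}" using s by auto
    qed
  qed
  have inj: "inj_on (\<lambda>s. p * s) {1..y div p}" using p0 by (auto simp: inj_on_def)
  have "(\<Sum>t\<in>{t\<in>{1..y}. p dvd t}. g t * real (y div t)) = (\<Sum>s\<in>{1..y div p}. g (p * s) * real (y div (p * s)))"
    unfolding img by (subst sum.reindex[OF inj]) simp
  also have "\<dots> = (\<Sum>s\<in>{1..y div p}. real p ^ 3 * (g s * real (y div p div s)))"
    by (rule sum.cong[OF refl]) (simp add: g div_mult2_eq)
  also have "\<dots> = real p ^ 3 * W g (y div p)"
    unfolding W_def by (simp add: sum_distrib_left)
  finally show ?thesis using split by simp
qed


lemma W_decomp:
  fixes p :: nat and f g :: "nat \<Rightarrow> real"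
  assumes p: "prime p"
    and f: "\<And>a t. t > 0 \<Longrightarrow> \<not> p dvd t \<Longrightarrow> f (p^a * t) = real p ^ a * g t"
    and g: "\<And>s. s > 0 \<Longrightarrow> g (p * s) = real p ^ 3 * g s"
  shows "W f D = (\<Sum>a<D. real p ^ a * (W g (D div p^a) - real p ^ 3 * W g (D div p ^ Suc a)))"
proof -
  have p0: "p > 0" using p prime_gt_0_nat by blast
  have p1: "p > 1" using p prime_gt_1_nat by blast
  have pe: "prime_elem p" using p by simp
  define Sg where "Sg = Sigma {..<D} (\<lambda>a. {t\<in>{1..D div p^a}. \<not> p dvd t})"
  have "W f D = (\<Sum>x\<in>Sg. f (p ^ fst x * snd x) * real (D div (p ^ fst x * snd x)))"
    unfolding W_def
  proof (rule sum.reindex_bij_witness[where i = "\<lambda>x. p ^ fst x * snd x"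
        and j = "\<lambda>e. (multiplicity p e, e div p ^ multiplicity p e)"])
    fix e assume e: "e \<in> {1..D}"
    have e0: "e \<noteq> 0" using e by simp
    define m where "m = multiplicity p e"
    have dv: "p ^ m dvd e" unfolding m_def by (rule multiplicity_dvd)
    show "p ^ fst (multiplicity p e, e div p ^ multiplicity p e) * snd (multiplicity p e, e div p ^ multiplicity p e) = e"
      unfolding fst_conv snd_conv by (rule dvd_mult_div_cancel[OF multiplicity_dvd])
    have nd: "\<not> p dvd e div p ^ m" unfolding m_def by (rule multiplicity_decompose) (use e0 p in \<open>auto simp: not_prime_unit\<close>)
    have pm_le: "p ^ m \<le> e" using dv e0 by (simp add: dvd_imp_le)
    have "m < p ^ m" using p1 by (simp add: power_gt_expt)
    hence mD: "m < D" using pm_le e by simp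
    have t1: "e div p ^ m \<ge> 1" using dv e0 by (metis One_nat_def Suc_leI bot_nat_0.not_eq_extremum div_by_0 dvd_div_eq_0_iff)
    have "e div p ^ m * p ^ m \<le> D" using dv e by simp
    hence t2: "e div p ^ m \<le> D div p ^ m" using p0 by (simp add: less_eq_div_iff_mult_less_eq)
    show "(multiplicity p e, e div p ^ multiplicity p e) \<in> Sg"
      unfolding Sg_def using mD t1 t2 nd unfolding m_def by simp
  next
    fix x assume x: "x \<in> Sg"
    obtain a t where at: "x = (a,t)" by (cases x)
    have a: "a < D" and t: "1 \<le> t" "t \<le> D div p^a" "\<not> p dvd t"
      using x unfolding Sg_def at by auto
    have t0: "t \<noteq> 0" using t by simp
    have pa0: "p ^ a \<noteq> 0" using p0 by simp
    have mult: "multiplicity p (p ^ a * t) = a"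
      using prime_elem_multiplicity_mult_distrib[OF pe pa0 t0] pe t(3)
      by (simp add: not_dvd_imp_multiplicity_0)
    show "(multiplicity p (p ^ fst x * snd x), p ^ fst x * snd x div p ^ multiplicity p (p ^ fst x * snd x)) = x"
      using at mult p0 by simp
    have "t * p ^ a \<le> D" using t(2) p0 by (simp add: less_eq_div_iff_mult_less_eq)
    moreover have "p ^ a * t \<ge> 1" using t0 pa0 by (simp add: Suc_le_eq)
    ultimately show "p ^ fst x * snd x \<in> {1..D}" using at by (simp add: mult.commute)
  next
    fix e assume e: "e \<in> {1..D}"
    have dv: "p ^ multiplicity p e dvd e" by (rule multiplicity_dvd)
    show "f (p ^ fst (multiplicity p e, e div p ^ multiplicity p e) * snd (multiplicity p e, e div p ^ multiplicity p e)) *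
          real (D div (p ^ fst (multiplicity p e, e div p ^ multiplicity p e) * snd (multiplicity p e, e div p ^ multiplicity p e)))
          = f e * real (D div e)" unfolding fst_conv snd_conv dvd_mult_div_cancel[OF dv] ..
  qed
  also have "\<dots> = (\<Sum>a<D. \<Sum>t\<in>{t\<in>{1..D div p^a}. \<not> p dvd t}. f (p ^ a * t) * real (D div (p ^ a * t)))"
    unfolding Sg_def by (subst sum.Sigma) (auto simp: case_prod_unfold)
  also have "\<dots> = (\<Sum>a<D. real p ^ a * (\<Sum>t\<in>{t\<in>{1..D div p^a}. \<not> p dvd t}. g t * real (D div p ^ a div t)))"
  proof (rule sum.cong[OF refl])
    fix a assume "a \<in> {..<D}"
    have "(\<Sum>t\<in>{t\<in>{1..D div p^a}. \<not> p dvd t}. f (p ^ a * t) * real (D div (p ^ a * t)))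
        = (\<Sum>t\<in>{t\<in>{1..D div p^a}. \<not> p dvd t}. real p ^ a * (g t * real (D div p ^ a div t)))"
    proof (rule sum.cong[OF refl])
      fix t assume t: "t \<in> {t\<in>{1..D div p^a}. \<not> p dvd t}"
      hence "t > 0" "\<not> p dvd t" by auto
      thus "f (p ^ a * t) * real (D div (p ^ a * t)) = real p ^ a * (g t * real (D div p ^ a div t))"
        using f by (simp add: div_mult2_eq)
    qed
    thus "(\<Sum>t\<in>{t\<in>{1..D div p^a}. \<not> p dvd t}. f (p ^ a * t) * real (D div (p ^ a * t)))
        = real p ^ a * (\<Sum>t\<in>{t\<in>{1..D div p^a}. \<not> p dvd t}. g t * real (D div p ^ a div t))"
      by (simp add: sum_distrib_left)
  qed
  also have "\<dots> = (\<Sum>a<D. real p ^ a * (W g (D div p^a) - real p ^ 3 * W g (D div p ^ Suc a)))"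
  proof (rule sum.cong[OF refl])
    fix a assume "a \<in> {..<D}"
    have "D div p ^ a div p = D div p ^ Suc a" by (simp only: power_Suc2 div_mult2_eq)
    thus "real p ^ a * (\<Sum>t\<in>{t\<in>{1..D div p^a}. \<not> p dvd t}. g t * real (D div p ^ a div t))
        = real p ^ a * (W g (D div p^a) - real p ^ 3 * W g (D div p ^ Suc a))"
      using coprime_part_sum[where g=g and p=p and y="D div p ^ a", OF p g] by simp
  qed
  finally show ?thesis .
qed



definition Cq :: "(nat \<Rightarrow> bool) \<Rightarrow> nat \<Rightarrow> int" where
  "Cq Q e = (\<Sum>m | m dvd e \<and> Q m. Jt m)"

lemma Cq_if: assumes "e > 0" shows "Cq Q e = (\<Sum>m | m dvd e. if Q m then Jt m else 0)"
proof -
  have fe: "finite {m. m dvd e}" using assms by simp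
  have eq: "{m. m dvd e \<and> Q m} = {m \<in> {m. m dvd e}. Q m}" by auto
  show ?thesis unfolding Cq_def eq by (rule sum.inter_filter[OF fe])
qed

lemma Cq_True: assumes "e > 0" shows "Cq (\<lambda>_. True) e = int e ^ 2"
  using Jt_sum[OF assms] unfolding Cq_def by simp

lemma Bk_Cq: "Bk k e = Cq (\<lambda>m. k dvd m) e"
  unfolding Bk_def Cq_def ..

lemma Bk_1: assumes "e > 0" shows "Bk 1 e = int e ^ 2"
proof -
  have e: "(\<lambda>m::nat. 1 dvd m) = (\<lambda>_. True)" by (rule ext) simp
  show ?thesis unfolding Bk_Cq e by (rule Cq_True[OF assms])
qed

lemma Bk_p: assumes "e > 0" shows "Bk p e = int e ^ 2 - Cq (\<lambda>m. \<not> p dvd m) e"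
proof -
  have "Bk p e = (\<Sum>m | m dvd e. if p dvd m then Jt m else 0)" unfolding Bk_Cq by (rule Cq_if[OF assms])
  also have "\<dots> = (\<Sum>m | m dvd e. (if True then Jt m else 0) - (if \<not> p dvd m then Jt m else 0))"
    by (rule sum.cong[OF refl]) simp
  also have "\<dots> = Cq (\<lambda>_. True) e - Cq (\<lambda>m. \<not> p dvd m) e"
    by (simp only: sum_subtractf Cq_if[OF assms])
  finally show ?thesis using Cq_True[OF assms] by simp
qed

lemma Bk_pq: assumes "e > 0" and p: "prime p" and q: "prime q" and pq: "p \<noteq> q"
  shows "Bk (p * q) e = int e ^ 2 - Cq (\<lambda>m. \<not> p dvd m) e - Cq (\<lambda>m. \<not> q dvd m) e
           + Cq (\<lambda>m. \<not> p dvd m \<and> \<not> q dvd m) e"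
proof -
  have cop: "coprime p q" using p q pq by (simp add: primes_coprime)
  have "Bk (p * q) e = (\<Sum>m | m dvd e. if p * q dvd m then Jt m else 0)" unfolding Bk_Cq by (rule Cq_if[OF assms(1)])
  also have "\<dots> = (\<Sum>m | m dvd e. (if True then Jt m else 0) - (if \<not> p dvd m then Jt m else 0)
                    - (if \<not> q dvd m then Jt m else 0) + (if \<not> p dvd m \<and> \<not> q dvd m then Jt m else 0))"
  proof (rule sum.cong[OF refl])
    fix m
    have "p * q dvd m \<longleftrightarrow> p dvd m \<and> q dvd m"
    proof
      assume "p * q dvd m" thus "p dvd m \<and> q dvd m" using dvd_mult_left dvd_mult_right by blast
    next
      assume "p dvd m \<and> q dvd m" thus "p * q dvd m" using divides_mult[OF _ _ cop] by blast
    qed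
    thus "(if p * q dvd m then Jt m else 0) = (if True then Jt m else 0) - (if \<not> p dvd m then Jt m else 0)
                    - (if \<not> q dvd m then Jt m else 0) + (if \<not> p dvd m \<and> \<not> q dvd m then Jt m else 0)"
      by simp
  qed
  also have "\<dots> = Cq (\<lambda>_. True) e - Cq (\<lambda>m. \<not> p dvd m) e - Cq (\<lambda>m. \<not> q dvd m) e
           + Cq (\<lambda>m. \<not> p dvd m \<and> \<not> q dvd m) e"
    by (simp only: sum_subtractf sum.distrib Cq_if[OF assms(1)])
  finally show ?thesis using Cq_True[OF assms(1)] by simp
qed

lemma Cq_shift:
  fixes p t :: nat
  assumes p: "prime p" and t: "\<not> p dvd t"
  shows "Cq (\<lambda>m. \<not> p dvd m \<and> R m) (p ^ a * t) = Cq R t"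
proof -
  have "{m. m dvd p ^ a * t \<and> (\<not> p dvd m \<and> R m)} = {m. m dvd t \<and> R m}"
  proof (intro Set.equalityI subsetI)
    fix m assume m: "m \<in> {m. m dvd p ^ a * t \<and> (\<not> p dvd m \<and> R m)}"
    have "coprime p m" using prime_imp_coprime[OF p] m by simp
    hence "coprime m p" by (simp add: coprime_commute)
    hence "coprime m (p ^ a)" by simp
    hence "m dvd t" using m by (simp add: coprime_dvd_mult_right_iff)
    thus "m \<in> {m. m dvd t \<and> R m}" using m by simp
  next
    fix m assume m: "m \<in> {m. m dvd t \<and> R m}"
    have "\<not> p dvd m" using m t dvd_trans by blast
    moreover have "m dvd p ^ a * t" using m by simp
    ultimately show "m \<in> {m. m dvd p ^ a * t \<and> (\<not> p dvd m \<and> R m)}" using m by simp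
  qed
  thus ?thesis unfolding Cq_def by simp
qed

definition f0 :: "nat \<Rightarrow> real" where "f0 e = real e ^ 3"
definition fp :: "nat \<Rightarrow> nat \<Rightarrow> real" where "fp p e = real e * real_of_int (Cq (\<lambda>m. \<not> p dvd m) e)"
definition fpq :: "nat \<Rightarrow> nat \<Rightarrow> nat \<Rightarrow> real" where
  "fpq p q e = real e * real_of_int (Cq (\<lambda>m. \<not> p dvd m \<and> \<not> q dvd m) e)"

lemma fp_shift: assumes p: "prime p" and t: "t > 0" "\<not> p dvd t"
  shows "fp p (p ^ a * t) = real p ^ a * f0 t"
proof -
  have "Cq (\<lambda>m. \<not> p dvd m) (p ^ a * t) = Cq (\<lambda>m. \<not> p dvd m \<and> True) (p ^ a * t)" by simp
  also have "\<dots> = Cq (\<lambda>_. True) t" by (rule Cq_shift[OF p t(2)])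
  also have "\<dots> = int t ^ 2" by (rule Cq_True[OF t(1)])
  finally show ?thesis unfolding fp_def f0_def by (simp add: power3_eq_cube power2_eq_square)
qed

lemma fpq_shift: assumes p: "prime p" and t: "t > 0" "\<not> p dvd t"
  shows "fpq p q (p ^ a * t) = real p ^ a * fp q t"
  unfolding fpq_def fp_def using Cq_shift[OF p t(2), of "\<lambda>m. \<not> q dvd m" a] by simp

lemma f0_mult: "f0 (p * s) = real p ^ 3 * f0 s"
  unfolding f0_def by (simp add: power_mult_distrib)

lemma fp_mult: assumes p: "prime p" and q: "prime q" and pq: "p \<noteq> q" and s: "s > 0"
  shows "fp q (p * s) = real p ^ 3 * fp q s"
proof -
  have s0: "s \<noteq> 0" using s by simp
  have qu: "\<not> is_unit q" using q not_prime_unit by blast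
  obtain t where t: "s = q ^ multiplicity q s * t" "\<not> q dvd t" by (rule multiplicity_decompose'[OF s0 qu])
  define b where "b = multiplicity q s"
  have t0: "t > 0" using t s by (auto intro: Nat.gr0I)
  have nq: "\<not> q dvd p * t"
  proof
    assume "q dvd p * t"
    hence "q dvd p \<or> q dvd t" using q by (simp add: prime_dvd_mult_iff)
    moreover have "\<not> q dvd p" using p q pq by (metis primes_dvd_imp_eq)
    ultimately show False using t(2) by blast
  qed
  have pt0: "p * t > 0" using t0 p prime_gt_0_nat by simp
  have "fp q (p * s) = fp q (q ^ b * (p * t))" using t unfolding b_def by (simp add: ac_simps)
  also have "\<dots> = real q ^ b * f0 (p * t)" by (rule fp_shift[OF q pt0 nq])
  also have "\<dots> = real p ^ 3 * (real q ^ b * f0 t)" by (simp add: f0_mult)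
  also have "real q ^ b * f0 t = fp q s" using fp_shift[OF q t0 t(2), of b] t unfolding b_def by simp
  finally show ?thesis .
qed

definition Op :: "nat \<Rightarrow> (nat \<Rightarrow> real) \<Rightarrow> nat \<Rightarrow> real" where
  "Op p F D = (\<Sum>a<D. real p ^ a * (F (D div p^a) - real p ^ 3 * F (D div p ^ Suc a)))"

lemma W_fp: assumes "prime p" shows "W (fp p) D = Op p (W f0) D"
  unfolding Op_def by (rule W_decomp[OF assms]) (auto intro: fp_shift[OF assms] f0_mult)

lemma W_fpq: assumes p: "prime p" and q: "prime q" and pq: "p \<noteq> q"
  shows "W (fpq p q) D = Op p (W (fp q)) D"
  unfolding Op_def by (rule W_decomp[OF p]) (auto intro: fpq_shift[OF p] fp_mult[OF p q pq])

lemma S_W: fixes k :: nat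
  assumes "\<And>e. e > 0 \<Longrightarrow> real e * real_of_int (Bk k e) = h e"
  shows "real_of_int (S k D) = W h D"
proof -
  have "real_of_int (S k D) = (\<Sum>e\<in>{1..D}. real e * real_of_int (Bk k e) * real (D div e))"
    unfolding S_reform by simp
  also have "\<dots> = W h D" unfolding W_def
    by (rule sum.cong[OF refl]) (use assms in auto)
  finally show ?thesis .
qed

lemma S1_W: "real_of_int (S 1 D) = W f0 D"
proof (rule S_W)
  fix e :: nat assume e: "e > 0"
  show "real e * real_of_int (Bk 1 e) = f0 e" using Bk_1[OF e] unfolding f0_def
    by (simp add: power3_eq_cube power2_eq_square)
qed

lemma Sp_W: "real_of_int (S p D) = W f0 D - W (fp p) D"
proof -
  have "real_of_int (S p D) = W (\<lambda>e. f0 e - fp p e) D"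
    by (rule S_W) (simp add: Bk_p f0_def fp_def power3_eq_cube power2_eq_square algebra_simps)
  also have "\<dots> = W f0 D - W (fp p) D" unfolding W_def by (simp add: sum_subtractf algebra_simps)
  finally show ?thesis .
qed

lemma Spq_W: assumes p: "prime p" and q: "prime q" and pq: "p \<noteq> q"
  shows "real_of_int (S (p * q) D) = W f0 D - W (fp p) D - W (fp q) D + W (fpq p q) D"
proof -
  have "real_of_int (S (p * q) D) = W (\<lambda>e. f0 e - fp p e - fp q e + fpq p q e) D"
    by (rule S_W) (simp add: Bk_pq[OF _ p q pq] f0_def fp_def fpq_def power3_eq_cube power2_eq_square algebra_simps)
  also have "\<dots> = W f0 D - W (fp p) D - W (fp q) D + W (fpq p q) D"
    unfolding W_def by (simp add: sum_subtractf sum.distrib algebra_simps)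
  finally show ?thesis .
qed



lemma pow4_diff:
  fixes m y :: real
  assumes "0 \<le> m" "m \<le> y" "y \<le> m + 1"
  shows "y ^ 4 - m ^ 4 \<le> 4 * y ^ 3"
proof -
  have y0: "0 \<le> y" using assms by simp
  have fac: "y ^ 4 - m ^ 4 = (y - m) * (y^3 + y^2 * m + y * m^2 + m^3)"
    by (simp add: algebra_simps power2_eq_square power3_eq_cube power4_eq_xxxx)
  have a1: "y^2 * m \<le> y^3" using assms y0 by (simp add: power2_eq_square power3_eq_cube mult_left_mono)
  have a2: "y * m^2 \<le> y^3"
  proof -
    have "m^2 \<le> y^2" using assms by (simp add: power_mono)
    hence "y * m^2 \<le> y * y^2" using y0 by (rule mult_left_mono)
    thus ?thesis by (simp add: power2_eq_square power3_eq_cube)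
  qed
  have a3: "m^3 \<le> y^3" using assms by (simp add: power_mono)
  have S: "y^3 + y^2 * m + y * m^2 + m^3 \<le> 4 * y^3" using a1 a2 a3 by simp
  have S0: "0 \<le> y^3 + y^2 * m + y * m^2 + m^3" using assms y0 by simp
  have "(y - m) * (y^3 + y^2 * m + y * m^2 + m^3) \<le> 1 * (4 * y^3)"
    by (rule mult_mono) (use assms S S0 in auto)
  thus ?thesis using fac by simp
qed



lemma term_bound:
  fixes F :: "nat \<Rightarrow> real" and c \<alpha> K :: real and v D :: nat
  assumes Fb: "\<And>m. \<bar>F m - \<alpha> * real m ^ 4\<bar> \<le> K * real m ^ 3"
    and \<alpha>: "\<alpha> \<ge> 0" and K: "K \<ge> 0" and v: "v > 0"
  shows "\<bar>c * F (D div v) - \<alpha> * (c / real v ^ 4) * real D ^ 4\<bar> \<le> (K + 4 * \<alpha>) * (\<bar>c\<bar> / real v ^ 3) * real D ^ 3"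
proof -
  define y where "y = real D / real v"
  define m where "m = D div v"
  have v0: "real v > 0" using v by simp
  have my: "real m \<le> y" unfolding m_def y_def by (rule of_nat_div_le_of_nat)
  have "D < (m + 1) * v" unfolding m_def using v
    by (metis add.commute dividend_less_div_times mult.commute mult_Suc_right plus_1_eq_Suc)
  hence "real D < (real m + 1) * real v" by (metis of_nat_1 of_nat_add of_nat_less_iff of_nat_mult)
  hence ym: "y \<le> real m + 1" unfolding y_def using v0 by (simp add: divide_le_eq less_imp_le)
  have m0: "0 \<le> real m" by simp
  have d4: "y ^ 4 - real m ^ 4 \<le> 4 * y ^ 3" by (rule pow4_diff[OF m0 my ym])
  have m4: "real m ^ 4 \<le> y ^ 4" using my m0 by (simp add: power_mono)
  have m3: "real m ^ 3 \<le> y ^ 3" using my m0 by (simp add: power_mono)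
  have mm: "\<alpha> * real m ^ 4 \<le> \<alpha> * y ^ 4" using mult_left_mono[OF m4 \<alpha>] .
  have t: "\<bar>(F m - \<alpha> * real m ^ 4) - (\<alpha> * y ^ 4 - \<alpha> * real m ^ 4)\<bar>
     \<le> \<bar>F m - \<alpha> * real m ^ 4\<bar> + \<bar>\<alpha> * y ^ 4 - \<alpha> * real m ^ 4\<bar>" by (rule abs_triangle_ineq4)
  have eq: "(F m - \<alpha> * real m ^ 4) - (\<alpha> * y ^ 4 - \<alpha> * real m ^ 4) = F m - \<alpha> * y ^ 4" by simp
  have ae: "\<bar>\<alpha> * y ^ 4 - \<alpha> * real m ^ 4\<bar> = \<alpha> * (y ^ 4 - real m ^ 4)"
    using mm by (simp add: right_diff_distrib)
  have "\<bar>F m - \<alpha> * y ^ 4\<bar> \<le> \<bar>F m - \<alpha> * real m ^ 4\<bar> + \<alpha> * (y ^ 4 - real m ^ 4)"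
    using t unfolding eq ae .
  also have "\<dots> \<le> K * real m ^ 3 + \<alpha> * (4 * y ^ 3)"
    by (rule add_mono[OF Fb mult_left_mono[OF d4 \<alpha>]])
  also have "\<dots> \<le> K * y ^ 3 + \<alpha> * (4 * y ^ 3)"
    using mult_left_mono[OF m3 K] by simp
  finally have b: "\<bar>F m - \<alpha> * y ^ 4\<bar> \<le> (K + 4 * \<alpha>) * y ^ 3" by (simp add: algebra_simps)
  have e1: "\<alpha> * (c / real v ^ 4) * real D ^ 4 = c * (\<alpha> * y ^ 4)"
    unfolding y_def by (simp add: power_divide)
  have e2: "(\<bar>c\<bar> / real v ^ 3) * real D ^ 3 = \<bar>c\<bar> * y ^ 3"
    unfolding y_def by (simp add: power_divide)
  have "\<bar>c * F (D div v) - \<alpha> * (c / real v ^ 4) * real D ^ 4\<bar> = \<bar>c\<bar> * \<bar>F m - \<alpha> * y ^ 4\<bar>"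
    unfolding e1 m_def by (simp add: abs_mult[symmetric] right_diff_distrib)
  also have "\<dots> \<le> \<bar>c\<bar> * ((K + 4 * \<alpha>) * y ^ 3)" by (rule mult_left_mono[OF b]) simp
  also have "\<dots> = (K + 4 * \<alpha>) * (\<bar>c\<bar> / real v ^ 3) * real D ^ 3"
    unfolding mult.assoc e2 by (simp add: ac_simps)
  finally show ?thesis .
qed

lemma lemmaB:
  fixes F :: "nat \<Rightarrow> real" and c :: "nat \<Rightarrow> real" and \<nu> :: "nat \<Rightarrow> nat"
  assumes Fb: "\<And>m. \<bar>F m - \<alpha> * real m ^ 4\<bar> \<le> K * real m ^ 3"
    and \<alpha>: "\<alpha> \<ge> 0" and K: "K \<ge> 0"
    and \<nu>: "\<And>n. \<nu> n > n"
    and sm: "summable (\<lambda>n. \<bar>c n\<bar> / real (\<nu> n) ^ 3)"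
  shows "\<bar>(\<Sum>n<D. c n * F (D div \<nu> n)) - \<alpha> * (\<Sum>n. c n / real (\<nu> n) ^ 4) * real D ^ 4\<bar>
          \<le> (K + 5 * \<alpha>) * (\<Sum>n. \<bar>c n\<bar> / real (\<nu> n) ^ 3) * real D ^ 3"
proof -
  define a where "a n = c n / real (\<nu> n) ^ 4" for n
  define b where "b n = \<bar>c n\<bar> / real (\<nu> n) ^ 3" for n
  have nu1: "real (\<nu> n) \<ge> 1" for n using \<nu>[of n] by simp
  have b0: "b n \<ge> 0" for n unfolding b_def by simp
  have ab: "\<bar>a n\<bar> \<le> b n" for n
  proof -
    have "\<bar>a n\<bar> = \<bar>c n\<bar> / real (\<nu> n) ^ 4" unfolding a_def by (simp add: abs_divide)
    also have "\<dots> \<le> \<bar>c n\<bar> / real (\<nu> n) ^ 3"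
      using nu1[of n] by (intro divide_left_mono) (auto intro: power_increasing)
    finally show ?thesis unfolding b_def .
  qed
  have smb: "summable b" using sm unfolding b_def .
  have sma: "summable a" by (rule summable_comparison_test[OF _ smb]) (use ab in auto)
  have splitL: "(\<Sum>n. a n) = (\<Sum>n. a (n + D)) + (\<Sum>n<D. a n)"
    by (rule suminf_split_initial_segment[OF sma])
  have smbD: "summable (\<lambda>n. b (n + D))" using smb by (rule summable_ignore_initial_segment)
  have smaD: "summable (\<lambda>n. a (n + D))" using sma by (rule summable_ignore_initial_segment)
  have tailb: "(\<Sum>n. b (n + D)) \<le> (\<Sum>n. b n)"
    using suminf_split_initial_segment[OF smb, of D] sum_nonneg[of "{..<D}" b] b0 by simp
  have partb: "(\<Sum>n<D. b n) \<le> (\<Sum>n. b n)"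
    by (rule sum_le_suminf[OF smb]) (use b0 in auto)
  have T1: "\<bar>(\<Sum>n<D. c n * F (D div \<nu> n)) - \<alpha> * (\<Sum>n<D. a n) * real D ^ 4\<bar> \<le> (K + 4 * \<alpha>) * (\<Sum>n<D. b n) * real D ^ 3"
  proof -
    have "(\<Sum>n<D. c n * F (D div \<nu> n)) - \<alpha> * (\<Sum>n<D. a n) * real D ^ 4
        = (\<Sum>n<D. c n * F (D div \<nu> n) - \<alpha> * a n * real D ^ 4)"
      by (simp add: sum_subtractf sum_distrib_left sum_distrib_right)
    also have "\<bar>\<dots>\<bar> \<le> (\<Sum>n<D. \<bar>c n * F (D div \<nu> n) - \<alpha> * a n * real D ^ 4\<bar>)" by (rule sum_abs)
    also have "\<dots> \<le> (\<Sum>n<D. (K + 4 * \<alpha>) * b n * real D ^ 3)"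
    proof (rule sum_mono)
      fix n assume "n \<in> {..<D}"
      have "\<nu> n > 0" using \<nu>[of n] by simp
      thus "\<bar>c n * F (D div \<nu> n) - \<alpha> * a n * real D ^ 4\<bar> \<le> (K + 4 * \<alpha>) * b n * real D ^ 3"
        unfolding a_def b_def by (rule term_bound[OF Fb \<alpha> K])
    qed
    also have "\<dots> = (K + 4 * \<alpha>) * (\<Sum>n<D. b n) * real D ^ 3"
      by (simp add: sum_distrib_left sum_distrib_right mult.assoc)
    finally show ?thesis .
  qed
  have T2: "\<bar>\<alpha> * (\<Sum>n. a (n + D)) * real D ^ 4\<bar> \<le> \<alpha> * (\<Sum>n. b (n + D)) * real D ^ 3"
  proof -
    have pt: "\<bar>a (n + D)\<bar> * real D \<le> b (n + D)" for n
    proof -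
      have le: "real D \<le> real (\<nu> (n + D))" using \<nu>[of "n + D"] by simp
      have "\<bar>a (n + D)\<bar> * real D = \<bar>c (n + D)\<bar> * real D / real (\<nu> (n + D)) ^ 4"
        unfolding a_def by (simp add: abs_divide)
      also have "\<dots> \<le> \<bar>c (n + D)\<bar> * real (\<nu> (n + D)) / real (\<nu> (n + D)) ^ 4"
        by (intro divide_right_mono mult_left_mono le) auto
      also have "\<dots> = b (n + D)" unfolding b_def using nu1[of "n + D"]
        by (simp add: power_eq_if)
      finally show ?thesis .
    qed
    have sabs: "summable (\<lambda>n. \<bar>a (n + D)\<bar>)"
    proof (rule summable_comparison_test[OF _ smbD])
      show "\<exists>N. \<forall>n\<ge>N. norm \<bar>a (n + D)\<bar> \<le> b (n + D)" using ab by simp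
    qed
    have sabs2: "summable (\<lambda>n. \<bar>a (n + D)\<bar> * real D)" using sabs by (rule summable_mult2)
    have "\<bar>(\<Sum>n. a (n + D))\<bar> \<le> (\<Sum>n. \<bar>a (n + D)\<bar>)" by (rule summable_rabs[OF sabs])
    hence "\<bar>(\<Sum>n. a (n + D))\<bar> * real D \<le> (\<Sum>n. \<bar>a (n + D)\<bar>) * real D"
      by (rule mult_right_mono) simp
    also have "\<dots> = (\<Sum>n. \<bar>a (n + D)\<bar> * real D)"
      by (rule suminf_mult2[OF sabs])
    also have "\<dots> \<le> (\<Sum>n. b (n + D))"
      by (rule suminf_le[OF pt sabs2 smbD])
    finally have "\<bar>(\<Sum>n. a (n + D))\<bar> * real D \<le> (\<Sum>n. b (n + D))" .
    hence "\<alpha> * (\<bar>(\<Sum>n. a (n + D))\<bar> * real D) * real D ^ 3 \<le> \<alpha> * (\<Sum>n. b (n + D)) * real D ^ 3"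
      by (intro mult_right_mono mult_left_mono \<alpha>) auto
    thus ?thesis using \<alpha> by (simp add: abs_mult power_eq_if algebra_simps)
  qed
  have "(\<Sum>n<D. c n * F (D div \<nu> n)) - \<alpha> * (\<Sum>n. a n) * real D ^ 4
      = ((\<Sum>n<D. c n * F (D div \<nu> n)) - \<alpha> * (\<Sum>n<D. a n) * real D ^ 4) - \<alpha> * (\<Sum>n. a (n + D)) * real D ^ 4"
    unfolding splitL by (simp add: algebra_simps)
  also have "\<bar>\<dots>\<bar> \<le> (K + 4 * \<alpha>) * (\<Sum>n<D. b n) * real D ^ 3 + \<alpha> * (\<Sum>n. b (n + D)) * real D ^ 3"
    using T1 T2 by (simp add: abs_triangle_ineq4 order_trans[OF abs_triangle_ineq4 add_mono])
  also have "\<dots> \<le> (K + 4 * \<alpha>) * (\<Sum>n. b n) * real D ^ 3 + \<alpha> * (\<Sum>n. b n) * real D ^ 3"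
    by (intro add_mono mult_right_mono mult_left_mono partb tailb) (use \<alpha> K in auto)
  also have "\<dots> = (K + 5 * \<alpha>) * (\<Sum>n. b n) * real D ^ 3" by (simp add: algebra_simps)
  finally show ?thesis unfolding a_def b_def .
qed



definition PP :: "real \<Rightarrow> nat \<Rightarrow> real" where "PP x n = (\<Prod>k=1..n. 1 - x^2 / of_nat k^2)"

lemma PP_sums:
  assumes x: "x \<noteq> 0"
  shows "(\<lambda>n. PP x n / of_nat (Suc n)^2) sums ((1 - sin (pi * x) / (pi * x)) / x^2)"
proof -
  have "(\<lambda>n. PP x n - PP x (Suc n)) sums (PP x 0 - sin (pi * x) / (pi * x))"
    unfolding PP_def using x by (intro telescope_sums' sin_product_formula_real')
  also have "(\<lambda>n. PP x n - PP x (Suc n)) = (\<lambda>n. (x^2 / of_nat (Suc n)^2) * PP x n)"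
    unfolding PP_def by (simp add: prod.nat_ivl_Suc' algebra_simps)
  also have "PP x 0 = 1" by (simp add: PP_def)
  finally have "(\<lambda>n. x\<^sup>2 / (of_nat (Suc n))\<^sup>2 * PP x n) sums (1 - sin (pi * x) / (pi * x))" .
  from sums_divide[OF this, of "x^2"] x show ?thesis by simp
qed

primrec QQ :: "nat \<Rightarrow> real \<Rightarrow> real" where
  "QQ 0 x = 0"
| "QQ (Suc n) x = QQ n x * (1 - x^2 / of_nat (Suc n)^2) - 1 / of_nat (Suc n)^2"

lemma PP_QQ: "PP x n = 1 + x^2 * QQ n x"
proof (induction n)
  case 0 thus ?case by (simp add: PP_def)
next
  case (Suc n)
  have "PP x (Suc n) = PP x n * (1 - x^2 / of_nat (Suc n)^2)"
    unfolding PP_def by (simp add: prod.nat_ivl_Suc')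
  thus ?case using Suc by (simp add: algebra_simps add_divide_distrib)
qed

lemma QQ_cont: "continuous_on A (QQ n)"
  by (induction n) (auto intro!: continuous_intros)

definition HH :: "nat \<Rightarrow> real" where "HH n = (\<Sum>k<n. 1 / of_nat (Suc k)^2)"

lemma QQ_0: "QQ n 0 = - HH n"
  by (induction n) (simp_all add: HH_def)

lemma HH_le: "HH n \<le> pi^2 / 6"
proof -
  have s: "(\<lambda>k. 1 / of_nat (Suc k)^2) sums (pi^2/6)" using inverse_squares_sums by simp
  show ?thesis unfolding HH_def using sum_le_suminf[OF sums_summable[OF s], of "{..<n}"] sums_unique[OF s]
    by simp
qed

lemma QQ_bound: assumes "\<bar>x\<bar> \<le> 1" shows "\<bar>QQ n x\<bar> \<le> HH n"
proof (induction n)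
  case 0 thus ?case by (simp add: HH_def)
next
  case (Suc n)
  have x2: "x^2 \<le> 1" using assms by (simp add: abs_square_le_1)
  have "1 \<le> (of_nat (Suc n) :: real)^2" by simp
  hence "x^2 \<le> (of_nat (Suc n) :: real)^2" using x2 by linarith
  hence fa: "0 \<le> 1 - x^2 / of_nat (Suc n)^2" "1 - x^2 / of_nat (Suc n)^2 \<le> 1"
    using x2 by (auto simp: field_simps)
  have "\<bar>QQ (Suc n) x\<bar> \<le> \<bar>QQ n x\<bar> * \<bar>1 - x^2 / of_nat (Suc n)^2\<bar> + 1 / of_nat (Suc n)^2"
    by (simp add: abs_mult[symmetric] abs_triangle_ineq4 order_trans[OF abs_triangle_ineq4])
  also have "\<dots> \<le> \<bar>QQ n x\<bar> * 1 + 1 / of_nat (Suc n)^2"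
    using fa by (intro add_mono mult_left_mono) auto
  also have "\<dots> \<le> HH n + 1 / of_nat (Suc n)^2" using Suc by simp
  also have "\<dots> = HH (Suc n)" by (simp add: HH_def)
  finally show ?case .
qed



lemma QQ_sums:
  assumes x: "x \<noteq> 0"
  shows "(\<lambda>n. QQ n x / of_nat (Suc n)^2) sums (((1 - sin (pi * x) / (pi * x)) / x^2 - pi^2/6) / x^2)"
proof -
  have s1: "(\<lambda>n. PP x n / of_nat (Suc n)^2) sums ((1 - sin (pi * x) / (pi * x)) / x^2)" by (rule PP_sums[OF x])
  have s2: "(\<lambda>k. 1 / of_nat (Suc k)^2) sums (pi^2/6)" using inverse_squares_sums by simp
  have "(\<lambda>n. PP x n / of_nat (Suc n)^2 - 1 / of_nat (Suc n)^2) sums ((1 - sin (pi * x) / (pi * x)) / x^2 - pi^2/6)"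
    by (rule sums_diff[OF s1 s2])
  also have "(\<lambda>n. PP x n / of_nat (Suc n)^2 - 1 / of_nat (Suc n)^2) = (\<lambda>n. x^2 * (QQ n x / of_nat (Suc n)^2))"
    by (rule ext) (simp add: PP_QQ add_divide_distrib)
  finally have "(\<lambda>n. x^2 * (QQ n x / of_nat (Suc n)^2)) sums ((1 - sin (pi * x) / (pi * x)) / x^2 - pi^2/6)" .
  from sums_divide[OF this, of "x^2"] x show ?thesis by simp
qed

definition cc :: "nat \<Rightarrow> real" where "cc n = - sin_coeff (n + 5) * pi ^ (n + 4)"

lemma sc_vals: "sin_coeff 0 = 0" "sin_coeff 1 = 1" "sin_coeff 2 = 0" "sin_coeff 3 = -1/6"
  "sin_coeff 4 = 0" "sin_coeff 5 = 1/120" "sin_coeff (Suc 0) = 1"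
  by (simp_all add: sin_coeff_def fact_numeral)

lemma sin_init5: "(\<Sum>i<5. sin_coeff i * z^i) = z - z^3/6"
proof -
  have "(\<Sum>i<5. sin_coeff i * z^i) = sin_coeff 0 * z^0 + sin_coeff 1 * z^1 + sin_coeff 2 * z^2 + sin_coeff 3 * z^3 + sin_coeff 4 * z^4"
    by (simp add: lessThan_nat_numeral)
  thus ?thesis by (simp add: sc_vals)
qed

lemma cc_sums:
  assumes x: "x \<noteq> 0"
  shows "(\<lambda>n. cc n * x ^ n) sums (((1 - sin (pi * x) / (pi * x)) / x^2 - pi^2/6) / x^2)"
proof -
  define z where "z = pi * x"
  have z0: "z \<noteq> 0" using x by (simp add: z_def)
  have "(\<lambda>n. sin_coeff n * z^n) sums sin z" using sin_converges[of z] by simp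
  from sums_split_initial_segment[OF this, of 5]
  have "(\<lambda>n. sin_coeff (n + 5) * z^(n + 5)) sums (sin z - (z - z^3/6))" by (simp add: sin_init5)
  from sums_divide[OF sums_minus[OF this], of "pi * x^5"]
  have s: "(\<lambda>n. - (sin_coeff (n + 5) * z ^ (n + 5)) / (pi * x^5)) sums (- (sin z - (z - z ^ 3 / 6)) / (pi * x^5))" .
  have e1: "(\<lambda>n. - (sin_coeff (n + 5) * z ^ (n + 5)) / (pi * x^5)) = (\<lambda>n. cc n * x ^ n)"
  proof (rule ext)
    fix n
    have n5: "n + 5 = Suc (n + 4)" by simp
    have p5: "pi ^ (n + 5) = pi ^ (n + 4) * pi" unfolding n5 by (rule power_Suc2)
    have "z ^ (n + 5) = pi ^ (n + 4) * pi * (x ^ n * x ^ 5)"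
      unfolding z_def power_mult_distrib p5 power_add[of x n 5] ..
    thus "- (sin_coeff (n + 5) * z ^ (n + 5)) / (pi * x^5) = cc n * x ^ n"
      unfolding cc_def using x by (simp add: field_simps)
  qed
  have e2: "- (sin z - (z - z ^ 3 / 6)) / (pi * x^5) = ((1 - sin (pi * x) / (pi * x)) / x^2 - pi^2/6) / x^2"
    unfolding z_def using x by (simp add: field_simps eval_nat_numeral)
  show ?thesis using s unfolding e1 e2 .
qed

lemma cc_0: "cc 0 = -(pi ^ 4) / 120"
  by (simp add: cc_def sc_vals)

lemma UU_cont: "continuous_on (ball 0 1) (\<lambda>x. \<Sum>n. QQ n x / of_nat (Suc n)^2)"
proof (rule uniform_limit_theorem; (intro always_eventually allI)?)
  show "uniform_limit (ball 0 1) (\<lambda>n x. \<Sum>k<n. QQ k x / of_nat (Suc k)^2) (\<lambda>x. \<Sum>n. QQ n x / of_nat (Suc n)^2) sequentially"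
  proof (rule Weierstrass_m_test)
    fix n :: nat and x :: real assume x: "x \<in> ball 0 1"
    have "\<bar>x\<bar> \<le> 1" using x by simp
    hence "\<bar>QQ n x\<bar> \<le> pi^2/6" using QQ_bound HH_le order_trans by blast
    hence "\<bar>QQ n x\<bar> / (of_nat (Suc n))^2 \<le> (pi^2/6) / (of_nat (Suc n))^2"
      by (rule divide_right_mono) simp
    thus "norm (QQ n x / of_nat (Suc n)^2) \<le> (pi^2/6) / of_nat (Suc n)^2"
      by (simp only: real_norm_def abs_divide) simp
  next
    have "(\<lambda>k. 1 / of_nat (Suc k)^2) sums (pi^2/6)" using inverse_squares_sums by simp
    hence "summable (\<lambda>k. (pi^2/6) * (1 / of_nat (Suc k)^2))" by (intro summable_mult sums_summable)
    thus "summable (\<lambda>n. (pi^2/6) / (of_nat (Suc n) :: real)^2)" by simp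
  qed
qed (auto intro!: continuous_intros QQ_cont)

lemma HH_sums: "(\<lambda>n. HH n / of_nat (Suc n)^2) sums (pi ^ 4 / 120)"
proof -
  define U where "U x = (\<Sum>n. QQ n x / of_nat (Suc n)^2)" for x
  define f where "f x = (\<Sum>n. cc n * x ^ n)" for x
  have "isCont U 0" using UU_cont unfolding U_def
    by (subst (asm) continuous_on_eq_continuous_at) simp_all
  hence lim1: "U \<midarrow>0\<rightarrow> U 0" by (simp add: isCont_def)
  have smf: "summable (\<lambda>n. cc n * y ^ n)" for y
  proof (cases "y = 0")
    case True thus ?thesis by (simp only: summable_0_powser)
  next
    case False from cc_sums[OF False] show ?thesis by (rule sums_summable)
  qed
  have "isCont f 0" unfolding f_def by (rule isCont_powser_converges_everywhere[OF smf])
  hence "f \<midarrow>0\<rightarrow> f 0" by (simp add: isCont_def)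
  moreover have "f 0 = -(pi ^ 4) / 120" unfolding f_def by (simp add: cc_0)
  ultimately have lim2: "f \<midarrow>0\<rightarrow> -(pi ^ 4) / 120" by simp
  have ev: "eventually (\<lambda>x. f x = U x) (at (0::real))"
  proof -
    have "eventually (\<lambda>x. x \<noteq> (0::real)) (at 0)"
      by (auto simp add: eventually_at intro!: exI[of _ 1])
    thus ?thesis
    proof eventually_elim
      fix x :: real assume x: "x \<noteq> 0"
      show "f x = U x" unfolding f_def U_def
        using sums_unique[OF cc_sums[OF x]] sums_unique[OF QQ_sums[OF x]] by simp
    qed
  qed
  have "U \<midarrow>0\<rightarrow> -(pi ^ 4) / 120" by (rule Lim_transform_eventually[OF lim2 ev])
  hence U0: "U 0 = -(pi ^ 4) / 120" using lim1 LIM_unique by blast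
  have smU: "summable (\<lambda>n. QQ n 0 / of_nat (Suc n)^2)"
  proof -
    have "summable (\<lambda>n. (pi^2/6) * (1 / of_nat (Suc n)^2))"
      using inverse_squares_sums by (intro summable_mult sums_summable) simp
    moreover have "norm (QQ n 0 / of_nat (Suc n)^2) \<le> (pi^2/6) * (1 / of_nat (Suc n)^2)" for n
    proof -
      have "\<bar>QQ n 0\<bar> \<le> pi^2/6" using QQ_bound[of 0 n] HH_le[of n] by simp
      hence "\<bar>QQ n 0\<bar> / (of_nat (Suc n))^2 \<le> (pi^2/6) / (of_nat (Suc n))^2"
        by (rule divide_right_mono) simp
      thus ?thesis by (simp only: real_norm_def abs_divide) simp
    qed
    ultimately show ?thesis by (rule summable_comparison_test'[where N=0]) 
  qed
  have "(\<lambda>n. QQ n 0 / of_nat (Suc n)^2) sums (-(pi ^ 4) / 120)"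
    using smU U0 unfolding U_def by (simp add: summable_sums_iff)
  from sums_minus[OF this] show ?thesis by (simp add: QQ_0)
qed

lemma zeta4_sums: "(\<lambda>n. 1 / of_nat (Suc n) ^ 4) sums (pi ^ 4 / 90)"
proof -
  define a where "a n = 1 / (of_nat (Suc n) :: real) ^ 2" for n
  have HHa: "HH n = (\<Sum>k<n. a k)" for n unfolding HH_def a_def ..
  have id: "(\<Sum>n<N. a n)^2 = 2 * (\<Sum>n<N. HH n / of_nat (Suc n)^2) + (\<Sum>n<N. a n ^ 2)" for N
  proof (induction N)
    case 0 thus ?case by simp
  next
    case (Suc N)
    have "(\<Sum>n<Suc N. a n)^2 = (\<Sum>n<N. a n)^2 + 2 * (a N * (\<Sum>n<N. a n)) + a N ^ 2"
      by (simp add: power2_eq_square algebra_simps)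
    also have "a N * (\<Sum>n<N. a n) = HH N / of_nat (Suc N)^2" unfolding HHa a_def by simp
    finally show ?case using Suc by simp
  qed
  have s2: "(\<lambda>k. a k) sums (pi^2/6)" unfolding a_def using inverse_squares_sums by simp
  have l1: "(\<lambda>N. (\<Sum>n<N. a n)^2) \<longlonglongrightarrow> (pi^2/6)^2"
    using s2 unfolding sums_def by (intro tendsto_power)
  have l2: "(\<lambda>N. \<Sum>n<N. HH n / of_nat (Suc n)^2) \<longlonglongrightarrow> pi^4/120"
    using HH_sums unfolding sums_def .
  have "(\<lambda>N. (\<Sum>n<N. a n)^2 - 2 * (\<Sum>n<N. HH n / of_nat (Suc n)^2)) \<longlonglongrightarrow> (pi^2/6)^2 - 2 * (pi^4/120)"
    by (intro tendsto_intros l1 l2)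
  also have "(\<lambda>N. (\<Sum>n<N. a n)^2 - 2 * (\<Sum>n<N. HH n / of_nat (Suc n)^2)) = (\<lambda>N. \<Sum>n<N. a n ^ 2)"
    using id by (simp add: algebra_simps)
  also have "(pi^2/6)^2 - 2 * (pi^4/120) = pi^4/90" by (simp add: power2_eq_square field_simps eval_nat_numeral)
  finally have "(\<lambda>n. a n ^ 2) sums (pi^4/90)" unfolding sums_def .
  moreover have "(\<lambda>n. a n ^ 2) = (\<lambda>n. 1 / of_nat (Suc n) ^ 4)"
    unfolding a_def by (rule ext) (simp add: power_divide flip: power_mult)
  ultimately show ?thesis by simp
qed



definition good :: "(nat \<Rightarrow> real) \<Rightarrow> real \<Rightarrow> bool" where
  "good F \<alpha> \<longleftrightarrow> (\<exists>K\<ge>0. \<forall>m. \<bar>F m - \<alpha> * real m ^ 4\<bar> \<le> K * real m ^ 3)"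

lemma good_diff: assumes "good F a" "good G b" shows "good (\<lambda>m. F m - G m) (a - b)"
proof -
  obtain K1 where K1: "K1 \<ge> 0" "\<And>m. \<bar>F m - a * real m ^ 4\<bar> \<le> K1 * real m ^ 3" using assms(1) unfolding good_def by blast
  obtain K2 where K2: "K2 \<ge> 0" "\<And>m. \<bar>G m - b * real m ^ 4\<bar> \<le> K2 * real m ^ 3" using assms(2) unfolding good_def by blast
  have "\<bar>(F m - G m) - (a - b) * real m ^ 4\<bar> \<le> (K1 + K2) * real m ^ 3" for m
  proof -
    have "\<bar>(F m - G m) - (a - b) * real m ^ 4\<bar> \<le> \<bar>F m - a * real m ^ 4\<bar> + \<bar>G m - b * real m ^ 4\<bar>"
      by (simp add: algebra_simps abs_triangle_ineq4 order_trans[OF _ abs_triangle_ineq4])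
    also have "\<dots> \<le> K1 * real m ^ 3 + K2 * real m ^ 3" by (rule add_mono[OF K1(2) K2(2)])
    finally show ?thesis by (simp add: algebra_simps)
  qed
  thus ?thesis unfolding good_def using K1 K2 by (intro exI[of _ "K1 + K2"]) auto
qed

lemma good_add: assumes "good F a" "good G b" shows "good (\<lambda>m. F m + G m) (a + b)"
proof -
  obtain K1 where K1: "K1 \<ge> 0" "\<And>m. \<bar>F m - a * real m ^ 4\<bar> \<le> K1 * real m ^ 3" using assms(1) unfolding good_def by blast
  obtain K2 where K2: "K2 \<ge> 0" "\<And>m. \<bar>G m - b * real m ^ 4\<bar> \<le> K2 * real m ^ 3" using assms(2) unfolding good_def by blast
  have "\<bar>(F m + G m) - (a + b) * real m ^ 4\<bar> \<le> (K1 + K2) * real m ^ 3" for m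
  proof -
    have "\<bar>(F m + G m) - (a + b) * real m ^ 4\<bar> \<le> \<bar>F m - a * real m ^ 4\<bar> + \<bar>G m - b * real m ^ 4\<bar>"
      by (simp add: algebra_simps abs_triangle_ineq order_trans[OF _ abs_triangle_ineq])
    also have "\<dots> \<le> K1 * real m ^ 3 + K2 * real m ^ 3" by (rule add_mono[OF K1(2) K2(2)])
    finally show ?thesis by (simp add: algebra_simps)
  qed
  thus ?thesis unfolding good_def using K1 K2 by (intro exI[of _ "K1 + K2"]) auto
qed

lemma good_bigO: assumes "good F a" shows "(\<lambda>D. F D - a * real D ^ 4) \<in> O(\<lambda>D. real D ^ 3)"
proof -
  obtain K where K: "K \<ge> 0" "\<And>m. \<bar>F m - a * real m ^ 4\<bar> \<le> K * real m ^ 3" using assms unfolding good_def by blast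
  show ?thesis
  proof (rule bigoI[of _ K])
    show "\<forall>\<^sub>F x in at_top. norm (F x - a * real x ^ 4) \<le> K * norm (real x ^ 3)"
      using K(2) by (intro always_eventually allI) simp
  qed
qed



definition TT :: "nat \<Rightarrow> real" where "TT m = (\<Sum>t\<in>{1..m}. real t ^ 3)"

lemma TT_closed: "TT m = (real m * (real m + 1))^2 / 4"
proof (induction m)
  case 0 thus ?case by (simp add: TT_def)
next
  case (Suc m)
  have "TT (Suc m) = TT m + real (Suc m) ^ 3" unfolding TT_def by (simp add: sum.cl_ivl_Suc)
  thus ?case using Suc by (simp add: power2_eq_square power3_eq_cube field_simps)
qed

lemma aux_lin: "(b::real) \<le> a \<Longrightarrow> 0 \<le> a \<Longrightarrow> (2*a + b)/4 \<le> 1*a" by simp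

lemma TT_good: "\<bar>TT m - 1/4 * real m ^ 4\<bar> \<le> 1 * real m ^ 3"
proof -
  have "TT m - 1/4 * real m ^ 4 = (2 * real m ^ 3 + real m ^ 2) / 4"
    unfolding TT_closed by (simp add: power2_eq_square power3_eq_cube power4_eq_xxxx field_simps)
  moreover have m2: "real m ^ 2 \<le> real m ^ 3"
    by (cases m) (auto simp: power2_eq_square power3_eq_cube)
  moreover have nn: "0 \<le> (2 * real m ^ 3 + real m ^ 2) / 4" by simp
  moreover have "0 \<le> real m ^ 3" by simp
  ultimately show ?thesis by (simp only: abs_of_nonneg[OF nn] aux_lin)
qed

lemma le_of_mult: "(1::nat) \<le> e \<Longrightarrow> x * e \<le> D \<Longrightarrow> x \<le> D"
proof -
  assume a: "1 \<le> e" "x * e \<le> D"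
  have "x * 1 \<le> x * e" by (rule mult_le_mono2[OF a(1)])
  from this a(2) have "x * 1 \<le> D" by (rule order_trans)
  thus "x \<le> D" by simp
qed

lemma W_f0_TT: "W f0 D = (\<Sum>n<D. 1 * TT (D div Suc n))"
proof -
  have "W f0 D = (\<Sum>e\<in>{1..D}. \<Sum>w\<in>{w\<in>{1..D}. e * w \<le> D}. real e ^ 3)"
  proof (unfold W_def f0_def, rule sum.cong[OF refl])
    fix e assume e: "e \<in> {1..D}"
    have "{w\<in>{1..D}. e * w \<le> D} = {1..D div e}"
    proof (rule set_eqI)
      fix w
      have "e > 0" using e by simp
      thus "w \<in> {w\<in>{1..D}. e * w \<le> D} \<longleftrightarrow> w \<in> {1..D div e}"
        using e le_of_mult[of e w D] by (auto simp: less_eq_div_iff_mult_less_eq mult.commute)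
    qed
    thus "real e ^ 3 * real (D div e) = (\<Sum>w\<in>{w\<in>{1..D}. e * w \<le> D}. real e ^ 3)" by simp
  qed
  also have "\<dots> = (\<Sum>w\<in>{1..D}. \<Sum>e\<in>{e\<in>{1..D}. e * w \<le> D}. real e ^ 3)"
    by (rule sum.swap_restrict) simp_all
  also have "\<dots> = (\<Sum>w\<in>{1..D}. TT (D div w))"
  proof (rule sum.cong[OF refl])
    fix w assume w: "w \<in> {1..D}"
    have "{e\<in>{1..D}. e * w \<le> D} = {1..D div w}"
    proof (rule set_eqI)
      fix e
      have "w > 0" using w by simp
      thus "e \<in> {e\<in>{1..D}. e * w \<le> D} \<longleftrightarrow> e \<in> {1..D div w}"
        using w le_of_mult[of w e D] by (auto simp: less_eq_div_iff_mult_less_eq)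
    qed
    thus "(\<Sum>e\<in>{e\<in>{1..D}. e * w \<le> D}. real e ^ 3) = TT (D div w)" unfolding TT_def by simp
  qed
  also have "\<dots> = (\<Sum>n<D. TT (D div Suc n))"
    by (rule sum.reindex_bij_witness[where i = Suc and j = "\<lambda>w. w - 1"]) auto
  finally show ?thesis by simp
qed

lemma summable_inv_cubes: "summable (\<lambda>n. \<bar>1::real\<bar> / real (Suc n) ^ 3)"
proof -
  have s: "summable (\<lambda>n. 1 / real (Suc n) ^ 2)" using inverse_squares_sums sums_summable by simp
  show ?thesis
  proof (rule summable_comparison_test'[OF s, where N=0])
    fix n :: nat
    have "real (Suc n) ^ 2 \<le> real (Suc n) ^ 3" by (rule power_increasing) simp_all
    hence "1 / real (Suc n) ^ 3 \<le> 1 / real (Suc n) ^ 2"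
      by (intro divide_left_mono) simp_all
    thus "norm (\<bar>1::real\<bar> / real (Suc n) ^ 3) \<le> 1 / real (Suc n) ^ 2" by simp
  qed
qed

lemma good_Wf0: "good (W f0) (pi ^ 4 / 360)"
proof -
  have zs: "(\<Sum>n. 1 / real (Suc n) ^ 4) = pi ^ 4 / 90" using sums_unique[OF zeta4_sums] by simp
  have B: "\<bar>(\<Sum>n<D. 1 * TT (D div Suc n)) - 1/4 * (\<Sum>n. 1 / real (Suc n) ^ 4) * real D ^ 4\<bar>
          \<le> (1 + 5 * (1/4)) * (\<Sum>n. \<bar>1\<bar> / real (Suc n) ^ 3) * real D ^ 3" for D
    by (rule lemmaB[OF TT_good _ _ _ summable_inv_cubes]) simp_all
  have nn: "0 \<le> (\<Sum>n. \<bar>1::real\<bar> / real (Suc n) ^ 3)"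
    by (rule suminf_nonneg[OF summable_inv_cubes]) simp
  show ?thesis unfolding good_def
  proof (intro exI conjI allI)
    show "0 \<le> (1 + 5 * (1/4)) * (\<Sum>n. \<bar>1::real\<bar> / real (Suc n) ^ 3)" using nn by simp
    fix m
    show "\<bar>W f0 m - pi ^ 4 / 360 * real m ^ 4\<bar> \<le> (1 + 5 * (1/4)) * (\<Sum>n. \<bar>1::real\<bar> / real (Suc n) ^ 3) * real m ^ 3"
      using B[of m] unfolding W_f0_TT zs by simp
  qed
qed



lemma geo_fun1: assumes x: "x > (1::real)" shows "(\<lambda>a. \<bar>x ^ a\<bar> / (x ^ a) ^ 3) = (\<lambda>a. (1 / x^2) ^ a)"
proof (rule ext)
  fix a :: nat
  have x0: "x ^ a > 0" using x by simp
  have "(x ^ a) ^ 3 = x ^ a * (x ^ 2) ^ a" by (simp add: power3_eq_cube power2_eq_square power_mult_distrib)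
  thus "\<bar>x ^ a\<bar> / (x ^ a) ^ 3 = (1 / x^2) ^ a" using x0 by (simp add: power_divide)
qed

lemma geo_fun2: assumes x: "x > (1::real)" shows "(\<lambda>a. \<bar>x ^ 3 * x ^ a\<bar> / (x ^ Suc a) ^ 3) = (\<lambda>a. (1 / x^2) ^ a)"
proof (rule ext)
  fix a :: nat
  have x0: "x ^ a > 0" "x > 0" using x by simp_all
  have "(x ^ Suc a) ^ 3 = x ^ 3 * (x ^ a * (x ^ 2) ^ a)" by (simp add: power3_eq_cube power2_eq_square power_mult_distrib)
  thus "\<bar>x ^ 3 * x ^ a\<bar> / (x ^ Suc a) ^ 3 = (1 / x^2) ^ a" using x0 by (simp add: power_divide abs_mult)
qed

lemma geo_fun3: assumes x: "x > (1::real)" shows "(\<lambda>a. x ^ a / (x ^ a) ^ 4) = (\<lambda>a. (1 / x^3) ^ a)"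
proof (rule ext)
  fix a :: nat
  have x0: "x ^ a > 0" using x by simp
  have "(x ^ a) ^ 4 = x ^ a * (x ^ 3) ^ a" by (simp add: power3_eq_cube power4_eq_xxxx power_mult_distrib)
  thus "x ^ a / (x ^ a) ^ 4 = (1 / x^3) ^ a" using x0 by (simp add: power_divide)
qed

lemma geo_fun4: assumes x: "x > (1::real)" shows "(\<lambda>a. x ^ 3 * x ^ a / (x ^ Suc a) ^ 4) = (\<lambda>a. (1/x) * (1 / x^3) ^ a)"
proof (rule ext)
  fix a :: nat
  have x0: "x ^ a > 0" "x > 0" using x by simp_all
  have "(x ^ Suc a) ^ 4 = x ^ 3 * x * (x ^ a * (x ^ 3) ^ a)" by (simp add: power3_eq_cube power4_eq_xxxx power_mult_distrib)
  thus "x ^ 3 * x ^ a / (x ^ Suc a) ^ 4 = (1/x) * (1 / x^3) ^ a" using x0 by (simp add: power_divide)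
qed

definition beta :: "nat \<Rightarrow> real" where "beta p = real p ^ 2 / (real p ^ 2 + real p + 1)"

lemma good_Op:
  assumes p: "prime p" and g: "good F \<alpha>" and \<alpha>: "\<alpha> \<ge> 0"
  shows "good (Op p F) (\<alpha> * beta p)"
proof -
  obtain K where K: "K \<ge> 0" "\<And>m. \<bar>F m - \<alpha> * real m ^ 4\<bar> \<le> K * real m ^ 3" using g unfolding good_def by blast
  define x where "x = real p"
  have x1: "x > 1" unfolding x_def using prime_gt_1_nat[OF p] by simp
  have p1: "p > 1" using prime_gt_1_nat[OF p] .
  define c1 where "c1 a = x ^ a" for a :: nat
  define c2 where "c2 a = x ^ 3 * x ^ a" for a :: nat
  have nu1: "p ^ a > a" for a using power_gt_expt[of p a] p1 by simp
  have nu2: "p ^ Suc a > a" for a using power_gt_expt[of p "Suc a"] p1 by simp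
  have r1: "real (p ^ a) = x ^ a" for a unfolding x_def by simp
  have r2: "real (p ^ Suc a) = x ^ Suc a" for a unfolding x_def by (simp only: of_nat_power)
  have g2: "norm (1 / x^2) < 1" using x1 by simp
  have g3: "norm (1 / x^3) < 1" using x1 by simp
  have sm1: "summable (\<lambda>a. \<bar>c1 a\<bar> / real (p ^ a) ^ 3)"
    unfolding c1_def r1 geo_fun1[OF x1] by (rule summable_geometric[OF g2])
  have sm2: "summable (\<lambda>a. \<bar>c2 a\<bar> / real (p ^ Suc a) ^ 3)"
    unfolding c2_def r2 geo_fun2[OF x1] by (rule summable_geometric[OF g2])
  have L1: "(\<Sum>a. c1 a / real (p ^ a) ^ 4) = 1 / (1 - 1 / x^3)"
    unfolding c1_def r1 geo_fun3[OF x1] by (rule suminf_geometric[OF g3])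
  have L2: "(\<Sum>a. c2 a / real (p ^ Suc a) ^ 4) = (1/x) * (1 / (1 - 1 / x^3))"
    unfolding c2_def r2 geo_fun4[OF x1] suminf_mult[OF summable_geometric[OF g3]] suminf_geometric[OF g3] ..
  define B1 where "B1 = (\<Sum>a. \<bar>c1 a\<bar> / real (p ^ a) ^ 3)"
  define B2 where "B2 = (\<Sum>a. \<bar>c2 a\<bar> / real (p ^ Suc a) ^ 3)"
  have B1: "B1 \<ge> 0" unfolding B1_def by (rule suminf_nonneg[OF sm1]) simp
  have B2: "B2 \<ge> 0" unfolding B2_def by (rule suminf_nonneg[OF sm2]) simp
  have E1: "\<bar>(\<Sum>a<D. c1 a * F (D div p ^ a)) - \<alpha> * (1 / (1 - 1 / x^3)) * real D ^ 4\<bar> \<le> (K + 5 * \<alpha>) * B1 * real D ^ 3" for D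
    using lemmaB[OF K(2) \<alpha> K(1) nu1 sm1, of D] unfolding L1 B1_def .
  have E2: "\<bar>(\<Sum>a<D. c2 a * F (D div p ^ Suc a)) - \<alpha> * ((1/x) * (1 / (1 - 1 / x^3))) * real D ^ 4\<bar> \<le> (K + 5 * \<alpha>) * B2 * real D ^ 3" for D
    using lemmaB[OF K(2) \<alpha> K(1) nu2 sm2, of D] unfolding L2 B2_def .
  have beq: "1 / (1 - 1 / x^3) - (1/x) * (1 / (1 - 1 / x^3)) = beta p"
  proof -
    have x0: "x \<noteq> 0" "x - 1 \<noteq> 0" using x1 by auto
    have q: "x^2 + x + 1 \<noteq> 0" using x1 by (smt (verit) zero_le_power2)
    have f: "x^3 - 1 = (x - 1) * (x^2 + x + 1)" by (simp add: algebra_simps power2_eq_square power3_eq_cube)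
    have a: "1 / (1 - 1 / x^3) = x^3 / ((x - 1) * (x^2 + x + 1))"
    proof -
      have "1 - 1 / x^3 = (x^3 - 1) / x^3" using x0 by (simp add: field_simps)
      thus ?thesis using f x0 q by simp
    qed
    have "1 / (1 - 1 / x^3) - (1/x) * (1 / (1 - 1 / x^3)) = ((x - 1) / x) * (x^3 / ((x - 1) * (x^2 + x + 1)))"
    proof -
      have gen: "A - (1/x) * A = ((x - 1) / x) * A" for A using x0 by (simp add: field_simps)
      show ?thesis unfolding gen a ..
    qed
    also have "\<dots> = (x - 1) * x^3 / (x * ((x - 1) * (x^2 + x + 1)))" by simp
    also have "\<dots> = x^2 / (x^2 + x + 1)"
    proof -
      have "(x - 1) * x^3 = x^2 * (x * (x - 1))" by (simp add: power2_eq_square power3_eq_cube)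
      moreover have "x * ((x - 1) * (x^2 + x + 1)) = (x^2 + x + 1) * (x * (x - 1))" by simp
      moreover have "x * (x - 1) \<noteq> 0" using x0 by simp
      ultimately show ?thesis by simp
    qed
    finally show ?thesis unfolding beta_def x_def .
  qed
  have OpE: "Op p F D = (\<Sum>a<D. c1 a * F (D div p ^ a)) - (\<Sum>a<D. c2 a * F (D div p ^ Suc a))" for D
    unfolding Op_def c1_def c2_def x_def by (simp add: sum_subtractf algebra_simps)
  show ?thesis unfolding good_def
  proof (intro exI conjI allI)
    show "0 \<le> (K + 5 * \<alpha>) * (B1 + B2)" using K \<alpha> B1 B2 by simp
    fix m
    have "\<bar>Op p F m - \<alpha> * beta p * real m ^ 4\<bar>
       = \<bar>((\<Sum>a<m. c1 a * F (m div p ^ a)) - \<alpha> * (1 / (1 - 1 / x^3)) * real m ^ 4)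
          - ((\<Sum>a<m. c2 a * F (m div p ^ Suc a)) - \<alpha> * ((1/x) * (1 / (1 - 1 / x^3))) * real m ^ 4)\<bar>"
      unfolding OpE beq[symmetric] by (simp add: algebra_simps)
    also have "\<dots> \<le> (K + 5 * \<alpha>) * B1 * real m ^ 3 + (K + 5 * \<alpha>) * B2 * real m ^ 3"
      by (rule order_trans[OF abs_triangle_ineq4 add_mono[OF E1 E2]])
    also have "\<dots> = (K + 5 * \<alpha>) * (B1 + B2) * real m ^ 3" by (simp add: algebra_simps)
    finally show "\<bar>Op p F m - \<alpha> * beta p * real m ^ 4\<bar> \<le> (K + 5 * \<alpha>) * (B1 + B2) * real m ^ 3" .
  qed
qed

lemma beta_nonneg: "beta p \<ge> 0" unfolding beta_def by simp



lemma one_minus_beta: "1 - beta p = (real p + 1) / (real p ^ 2 + real p + 1)"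
proof -
  have q: "real p ^ 2 + real p + 1 \<noteq> 0" by (smt (verit) of_nat_0_le_iff zero_le_power2)
  thus ?thesis unfolding beta_def by (simp add: field_simps)
qed

theorem proposition5p2:
  fixes p q :: nat
  assumes "prime p" and "prime q" and "p \<noteq> q"
  shows "((\<lambda>D. real_of_int (S 1 D) - pi^4 * real D ^ 4 / (2^3 * 3^2 * 5))
           \<in> O(\<lambda>D. real D ^ 3)) \<and>
         ((\<lambda>D. real_of_int (S p D) - pi^4 * real D ^ 4 / (2^3 * 3^2 * 5)
                 * ((real p + 1) / (real p ^ 2 + real p + 1)))
           \<in> O(\<lambda>D. real D ^ 3)) \<and>
         ((\<lambda>D. real_of_int (S (p * q) D) - pi^4 * real D ^ 4 / (2^3 * 3^2 * 5)
                 * ((real p + 1) / (real p ^ 2 + real p + 1))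
                 * ((real q + 1) / (real q ^ 2 + real q + 1)))
           \<in> O(\<lambda>D. real D ^ 3))"
proof (intro conjI)
  define a0 :: real where "a0 = pi ^ 4 / 360"
  have a0: "a0 \<ge> 0" unfolding a0_def by simp
  have g0: "good (W f0) a0" unfolding a0_def by (rule good_Wf0)
  have gp: "good (Op p (W f0)) (a0 * beta p)" by (rule good_Op[OF assms(1) g0 a0])
  have gq: "good (Op q (W f0)) (a0 * beta q)" by (rule good_Op[OF assms(2) g0 a0])
  have a0q: "a0 * beta q \<ge> 0" using a0 beta_nonneg by simp
  have gpq: "good (Op p (Op q (W f0))) (a0 * beta q * beta p)" by (rule good_Op[OF assms(1) gq a0q])
  have Wq: "W (fp q) = Op q (W f0)" by (rule ext) (rule W_fp[OF assms(2)])
  show "(\<lambda>D. real_of_int (S 1 D) - pi^4 * real D ^ 4 / (2^3 * 3^2 * 5)) \<in> O(\<lambda>D. real D ^ 3)"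
  proof -
    have "(\<lambda>D. real_of_int (S 1 D) - pi^4 * real D ^ 4 / (2^3 * 3^2 * 5)) = (\<lambda>D. W f0 D - a0 * real D ^ 4)"
      unfolding S1_W a0_def by simp
    thus ?thesis using good_bigO[OF g0] by simp
  qed
  show "(\<lambda>D. real_of_int (S p D) - pi^4 * real D ^ 4 / (2^3 * 3^2 * 5)
                 * ((real p + 1) / (real p ^ 2 + real p + 1))) \<in> O(\<lambda>D. real D ^ 3)"
  proof -
    have g: "good (\<lambda>D. W f0 D - Op p (W f0) D) (a0 - a0 * beta p)" by (rule good_diff[OF g0 gp])
    have "(\<lambda>D. real_of_int (S p D) - pi^4 * real D ^ 4 / (2^3 * 3^2 * 5)
                 * ((real p + 1) / (real p ^ 2 + real p + 1)))
         = (\<lambda>D. (W f0 D - Op p (W f0) D) - (a0 - a0 * beta p) * real D ^ 4)"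
    proof (rule ext)
      fix D
      have "a0 - a0 * beta p = a0 * (1 - beta p)" by (simp add: algebra_simps)
      thus "real_of_int (S p D) - pi^4 * real D ^ 4 / (2^3 * 3^2 * 5)
                 * ((real p + 1) / (real p ^ 2 + real p + 1))
         = (W f0 D - Op p (W f0) D) - (a0 - a0 * beta p) * real D ^ 4"
        unfolding Sp_W W_fp[OF assms(1)] one_minus_beta a0_def by simp
    qed
    thus ?thesis using good_bigO[OF g] by simp
  qed
  show "(\<lambda>D. real_of_int (S (p * q) D) - pi^4 * real D ^ 4 / (2^3 * 3^2 * 5)
                 * ((real p + 1) / (real p ^ 2 + real p + 1))
                 * ((real q + 1) / (real q ^ 2 + real q + 1))) \<in> O(\<lambda>D. real D ^ 3)"
  proof -
    have g: "good (\<lambda>D. W f0 D - Op p (W f0) D - Op q (W f0) D + Op p (Op q (W f0)) D)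
               (a0 - a0 * beta p - a0 * beta q + a0 * beta q * beta p)"
      by (rule good_add[OF good_diff[OF good_diff[OF g0 gp] gq] gpq])
    have "(\<lambda>D. real_of_int (S (p * q) D) - pi^4 * real D ^ 4 / (2^3 * 3^2 * 5)
                 * ((real p + 1) / (real p ^ 2 + real p + 1))
                 * ((real q + 1) / (real q ^ 2 + real q + 1)))
         = (\<lambda>D. (W f0 D - Op p (W f0) D - Op q (W f0) D + Op p (Op q (W f0)) D)
                - (a0 - a0 * beta p - a0 * beta q + a0 * beta q * beta p) * real D ^ 4)"
    proof (rule ext)
      fix D
      have c: "a0 - a0 * beta p - a0 * beta q + a0 * beta q * beta p = a0 * (1 - beta p) * (1 - beta q)"
        by (simp add: algebra_simps)
      have Sq: "real_of_int (S (p * q) D) = W f0 D - Op p (W f0) D - Op q (W f0) D + Op p (Op q (W f0)) D"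
        unfolding Spq_W[OF assms] W_fp[OF assms(1)] W_fp[OF assms(2)] W_fpq[OF assms] Wq ..
      show "real_of_int (S (p * q) D) - pi^4 * real D ^ 4 / (2^3 * 3^2 * 5)
                 * ((real p + 1) / (real p ^ 2 + real p + 1))
                 * ((real q + 1) / (real q ^ 2 + real q + 1))
         = (W f0 D - Op p (W f0) D - Op q (W f0) D + Op p (Op q (W f0)) D)
                - (a0 - a0 * beta p - a0 * beta q + a0 * beta q * beta p) * real D ^ 4"
        unfolding Sq c unfolding one_minus_beta a0_def by simp
    qed
    thus ?thesis using good_bigO[OF g] by simp
  qed
qed


end
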